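(* Let $P\subset\mathbb R^d$ be a $d$-polytope, $d\geq 3$, $S$ a simplex facet of $P$ in bounded position, and $\mathcal F,\mathcal N\subseteq\operatorname{adj}(S)$ disjoint with $\mathcal F$ nonsimple. Assume every vertex of $P$ lies in at least one facet of $P$ not in $\mathcal F\cup\mathcal N\cup\{S\}$. Then for $v\in V_S(\mathcal F,\mathcal N;P)$, the polytope $Q=\operatorname{conv}(P\cup\{v\})$ satisfies $f_0(Q)=f_0(P)+1$.
   Context: $f_0$ denotes the number of vertices. For a facet $F$ of $P$ let $H_F=\{x:\langle x,a_F\rangle=\ell_F\}$ be its affine hull, oriented so that $P\subseteq\{x:\langle x,a_F\rangle\geq\ell_F\}$; $H_F^+$, $H_F^-$ are the open sides $\{>\}$, $\{<\}$. Two facets are adjacent if they share a ridge; $\operatorname{adj}(S)$ is the set of facets adjacent to $S$. A simplex facet is a facet combinatorially equivalent to a $(d-1)$-simplex. $S$ is in bounded position if for every set of $d$ facets in $\operatorname{adj}(S)$ their hyperplanes meet in a point of $H_S^-$. $\mathcal F\subseteq\operatorname{adj}(S)$ is nonsimple if there is no pair of adjacent facets $G,G'\in\mathcal F$ having a common $(d-3)$-face with $S$. $V_S(\mathcal F,\mathcal N;P)$ is the set of points lying in $H_F^-$ for $F\in\mathcal N\cup\{S\}$, in $H_F$ for $F\in\mathcal F$, and in $H_F^+$ for all other facets $F$ of $P$. *)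

theory Defs
  imports "HOL-Analysis.Analysis"
begin

definition vertices :: "'a::euclidean_space set \<Rightarrow> 'a set" where
  "vertices P = {v. v extreme_point_of P}"

definition f0 :: "'a::euclidean_space set \<Rightarrow> nat" where
  "f0 P = card (vertices P)"

definition full_polytope :: "'a::euclidean_space set \<Rightarrow> bool" where
  "full_polytope P \<longleftrightarrow> polytope P \<and> aff_dim P = int DIM('a)"

definition hyp :: "'a::euclidean_space set \<Rightarrow> 'a set" where
  "hyp F = affine hull F"

definition plus_side :: "'a::euclidean_space set \<Rightarrow> 'a set \<Rightarrow> 'a set" where
  "plus_side P F = {x. \<exists>a l. a \<noteq> 0 \<and> affine hull F = {y. inner y a = l}
       \<and> P \<subseteq> {y. inner y a \<ge> l} \<and> inner x a > l}"

definition minus_side :: "'a::euclidean_space set \<Rightarrow> 'a set \<Rightarrow> 'a set" where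
  "minus_side P F = {x. \<exists>a l. a \<noteq> 0 \<and> affine hull F = {y. inner y a = l}
       \<and> P \<subseteq> {y. inner y a \<ge> l} \<and> inner x a < l}"

definition adjacent :: "'a::euclidean_space set \<Rightarrow> 'a set \<Rightarrow> 'a set \<Rightarrow> bool" where
  "adjacent P F G \<longleftrightarrow> F facet_of P \<and> G facet_of P \<and> F \<noteq> G \<and>
     (\<exists>R. R face_of P \<and> aff_dim R = aff_dim P - 2 \<and> R \<subseteq> F \<inter> G)"

definition adj :: "'a::euclidean_space set \<Rightarrow> 'a set \<Rightarrow> 'a set set" where
  "adj P S = {G. adjacent P S G}"

definition comb_equiv :: "'a::euclidean_space set \<Rightarrow> 'b::euclidean_space set \<Rightarrow> bool" where
  "comb_equiv P Q \<longleftrightarrow> (\<exists>f. bij_betw f {F. F face_of P} {G. G face_of Q} \<and>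
     (\<forall>F1 F2. F1 face_of P \<longrightarrow> F2 face_of P \<longrightarrow> (F1 \<subseteq> F2 \<longleftrightarrow> f F1 \<subseteq> f F2)))"

definition simplex_facet :: "'a::euclidean_space set \<Rightarrow> 'a set \<Rightarrow> bool" where
  "simplex_facet P S \<longleftrightarrow> S facet_of P \<and>
     (\<exists>T::'a set. (int DIM('a) - 1) simplex T \<and> comb_equiv S T)"

definition bounded_position :: "'a::euclidean_space set \<Rightarrow> 'a set \<Rightarrow> bool" where
  "bounded_position P S \<longleftrightarrow> (\<forall>\<G>. \<G> \<subseteq> adj P S \<and> card \<G> = DIM('a) \<longrightarrow>
     (\<exists>p. (\<Inter>G\<in>\<G>. hyp G) = {p} \<and> p \<in> minus_side P S))"

definition nonsimple :: "'a::euclidean_space set \<Rightarrow> 'a set \<Rightarrow> 'a set set \<Rightarrow> bool" where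
  "nonsimple P S \<F> \<longleftrightarrow> \<not> (\<exists>G\<in>\<F>. \<exists>G'\<in>\<F>. adjacent P G G' \<and>
     (\<exists>R. R face_of P \<and> aff_dim R = aff_dim P - 3 \<and> R \<subseteq> G \<inter> G' \<inter> S))"

definition VS :: "'a::euclidean_space set \<Rightarrow> 'a set \<Rightarrow> 'a set set \<Rightarrow> 'a set set \<Rightarrow> 'a set" where
  "VS P S \<F> \<N> = {x. (\<forall>F\<in>\<N> \<union> {S}. x \<in> minus_side P F) \<and>
     (\<forall>F\<in>\<F>. x \<in> hyp F) \<and>
     (\<forall>F. F facet_of P \<and> F \<notin> \<F> \<union> \<N> \<union> {S} \<longrightarrow> x \<in> plus_side P F)}"

end

theory Submission
  imports Defs
begin

lemma key_vertex:
  fixes P :: "'a::euclidean_space set" and v w a :: 'a and l :: real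
  assumes P: "convex P" "P \<noteq> {}" and Pa: "\<forall>y\<in>P. inner y a \<ge> l"
    and va: "inner v a > l" and wa: "inner w a = l" and w: "w extreme_point_of P"
  shows "w extreme_point_of (convex hull (insert v P))"
proof -
  let ?Q = "convex hull (insert v P)"
  let ?H = "{x. a \<bullet> x = l}"
  have hs: "insert v P \<subseteq> {x. a \<bullet> x \<ge> l}"
    using Pa va by (auto simp: inner_commute)
  have Qa: "\<And>x. x \<in> ?Q \<Longrightarrow> a \<bullet> x \<ge> l"
    using hull_minimal[of "insert v P" "{x. a \<bullet> x \<ge> l}" convex] hs convex_halfspace_ge[of l a] by blast
  have fQ: "(?Q \<inter> ?H) face_of ?Q"
    by (rule face_of_Int_supporting_hyperplane_ge) (auto simp: Qa)
  have fP: "(P \<inter> ?H) face_of P"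
    by (rule face_of_Int_supporting_hyperplane_ge) (use P Pa in \<open>auto simp: inner_commute\<close>)
  have eq: "?Q \<inter> ?H = P \<inter> ?H"
  proof
    show "P \<inter> ?H \<subseteq> ?Q \<inter> ?H" using hull_subset[of "insert v P" convex] by auto
  next
    show "?Q \<inter> ?H \<subseteq> P \<inter> ?H"
    proof
      fix x assume x: "x \<in> ?Q \<inter> ?H"
      then obtain u t b where ut: "u \<ge> 0" "t \<ge> 0" "u + t = 1" "b \<in> P"
          "x = u *\<^sub>R v + t *\<^sub>R b"
      proof -
        have cc: "convex hull P = P" using P(1) by (simp add: convex_hull_eq)
        have "x \<in> convex hull (insert v P)" using x by blast
        then show ?thesis using that unfolding convex_hull_insert[OF P(2), of v] cc by blast
      qed
      have "a \<bullet> x = u * (a \<bullet> v) + t * (a \<bullet> b)"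
        using ut by (simp add: inner_add_right)
      moreover have "a \<bullet> b \<ge> l" using Pa ut by (auto simp: inner_commute)
      moreover have "a \<bullet> v > l" using va by (simp add: inner_commute)
      moreover have "a \<bullet> x = l" using x by auto
      ultimately have "u = 0"
      proof -
        assume h: "a \<bullet> x = u * (a \<bullet> v) + t * (a \<bullet> b)" "a \<bullet> b \<ge> l" "a \<bullet> v > l" "a \<bullet> x = l"
        show "u = 0"
        proof (rule ccontr)
          assume "u \<noteq> 0" hence "u > 0" using ut by simp
          hence "u * (a \<bullet> v) > u * l" using h by simp
          moreover have "t * (a \<bullet> b) \<ge> t * l" using h ut mult_left_mono by blast
          ultimately have "a \<bullet> x > (u + t) * l" using h by (simp add: distrib_right)
          thus False using h ut by simp
        qed
      qed
      thus "x \<in> P \<inter> ?H" using ut x by auto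
    qed
  qed
  have "w \<in> P" using w by (simp add: extreme_point_of_def)
  have "w \<in> ?H" using wa by (simp add: inner_commute)
  hence "w extreme_point_of (P \<inter> ?H)"
    using extreme_point_of_face[OF fP] w \<open>w \<in> P\<close> by blast
  hence "w extreme_point_of (?Q \<inter> ?H)" using eq by simp
  thus ?thesis using extreme_point_of_face[OF fQ] by blast
qed

theorem corollary2p12:
  fixes P :: "'a::euclidean_space set" and S :: "'a set"
    and \<F> \<N> :: "'a set set" and v :: 'a
  assumes "full_polytope P"
    and "DIM('a) \<ge> 3"
    and "simplex_facet P S"
    and "bounded_position P S"
    and "\<F> \<subseteq> adj P S" and "\<N> \<subseteq> adj P S" and "\<F> \<inter> \<N> = {}"
    and "nonsimple P S \<F>"
    and "\<forall>w\<in>vertices P. \<exists>F. F facet_of P \<and> F \<notin> \<F> \<union> \<N> \<union> {S} \<and> w \<in> F"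
    and "v \<in> VS P S \<F> \<N>"
  shows "f0 (convex hull (insert v P)) = f0 P + 1"
proof -
  define V where "V = vertices P"
  obtain X where X: "finite X" "P = convex hull X"
    using assms(1) unfolding full_polytope_def polytope_def by blast
  have Pne: "P \<noteq> {}" using assms(1) unfolding full_polytope_def by auto
  have cP: "convex P" using X by simp
  have VX: "V \<subseteq> X" unfolding V_def vertices_def using X extreme_point_of_convex_hull by auto
  have fV: "finite V" using VX X finite_subset by blast
  have PV: "P = convex hull V"
    unfolding V_def vertices_def using X Krein_Milman_polytope by metis
  have VP: "V \<subseteq> P" unfolding V_def vertices_def using extreme_point_of_def by blast
  have vS: "v \<in> minus_side P S" using assms(10) unfolding VS_def by auto
  have vnP: "v \<notin> P"
  proof
    assume "v \<in> P"
    obtain a l where "P \<subseteq> {y. inner y a \<ge> l}" "inner v a < l"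
      using vS unfolding minus_side_def by blast
    thus False using \<open>v \<in> P\<close> by auto
  qed
  have Qeq: "convex hull (insert v P) = convex hull (insert v V)"
  proof
    show "convex hull (insert v P) \<subseteq> convex hull (insert v V)"
      apply (rule hull_minimal)
      using PV hull_mono[of V "insert v V" convex] hull_subset[of "insert v V" convex]
      by auto
    show "convex hull (insert v V) \<subseteq> convex hull (insert v P)"
      using VP by (intro hull_mono) auto
  qed
  have sub: "vertices (convex hull (insert v P)) \<subseteq> insert v V"
    unfolding vertices_def Qeq using extreme_point_of_convex_hull by auto
  have vv: "v \<in> vertices (convex hull (insert v P))"
    unfolding vertices_def Qeq
    using extreme_point_of_convex_hull_insert[OF fV] vnP PV by auto
  have ww: "w \<in> vertices (convex hull (insert v P))" if wV: "w \<in> V" for w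
  proof -
    obtain F where F: "F facet_of P" "F \<notin> \<F> \<union> \<N> \<union> {S}" "w \<in> F"
      using assms(9) wV V_def by blast
    have "v \<in> plus_side P F" using assms(10) F unfolding VS_def by auto
    then obtain a l where al: "affine hull F = {y. inner y a = l}"
        "P \<subseteq> {y. inner y a \<ge> l}" "inner v a > l"
      unfolding plus_side_def by blast
    have "inner w a = l" using al(1) F(3) hull_subset[of F affine] by auto
    thus ?thesis
      using key_vertex[OF cP Pne _ al(3)] al(2) wV unfolding V_def vertices_def by blast
  qed
  have "vertices (convex hull (insert v P)) = insert v V" using sub vv ww by blast
  moreover have "v \<notin> V" using VP vnP by blast
  ultimately show ?thesis unfolding f0_def V_def using fV V_def by simp
qed

end
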